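(* Let $\kappa>0$, $u_0>0$, and consider the sessile liquid channel with parameter $u_0$ and contact angle $\gamma$ resting on $\Pi$, with volume $\mathcal V(\gamma)$. Let $a=r(\gamma)$ and $R=r(\pi/2)$. If $0<\gamma\le\pi/2$, then $$\mathcal V(\gamma)<\frac{a^2}{\sin^2\gamma}(\gamma-\sin\gamma\cos\gamma).$$ If $\pi/2\le\gamma\le\pi$, then $$\mathcal V(\gamma)<R^2(\gamma-\sin\gamma\cos\gamma).$$
   Context: For $u_0>0$, $(r(\psi),u(\psi))$, $\psi\in[0,\pi]$, is the solution of $\frac{dr}{d\psi}=\frac{\cos\psi}{\kappa u}$, $\frac{du}{d\psi}=\frac{\sin\psi}{\kappa u}$, $r(0)=0$, $u(0)=u_0$ (profile of a $\kappa$-cylindrical surface parametrized by inclination angle $\psi$). The channel with contact angle $\gamma$ is the arc $\psi\in[0,\gamma]$ reflected in $r\mapsto-r$, resting on the line $u=u(\gamma)$; $2R$ is its maximal width (where it is vertical). Its volume per unit length is $\mathcal V(\gamma)=2\big(r(\gamma)u(\gamma)-\frac{\sin\gamma}\kappa\big)$. *)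

theory Defs
  imports Complex_Main
begin

text \<open>Profile (r,u) of a kappa-cylindrical surface parametrized by inclination angle psi in [0,pi]:
  r' = cos psi / (kappa u), u' = sin psi / (kappa u), r(0)=0, u(0)=u0.\<close>
definition kappa_profile :: "real \<Rightarrow> real \<Rightarrow> (real \<Rightarrow> real) \<Rightarrow> (real \<Rightarrow> real) \<Rightarrow> bool" where
  "kappa_profile \<kappa> u0 r u \<longleftrightarrow>
     r 0 = 0 \<and> u 0 = u0 \<and>
     (\<forall>\<psi>\<in>{0..pi}.
        (r has_real_derivative (cos \<psi> / (\<kappa> * u \<psi>))) (at \<psi> within {0..pi}) \<and>
        (u has_real_derivative (sin \<psi> / (\<kappa> * u \<psi>))) (at \<psi> within {0..pi}))"

definition channel_volume :: "real \<Rightarrow> (real \<Rightarrow> real) \<Rightarrow> (real \<Rightarrow> real) \<Rightarrow> real \<Rightarrow> real" where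
  "channel_volume \<kappa> r u \<gamma> = 2 * (r \<gamma> * u \<gamma> - sin \<gamma> / \<kappa>)"

end

theory Submission
  imports Defs
begin

lemma cos_neg: "pi/2 < t \<Longrightarrow> t < pi \<Longrightarrow> cos t < 0"
  using cos_gt_zero[of "pi - t"] by simp

locale prof =
  fixes \<kappa> u0 :: real and r u :: "real \<Rightarrow> real"
  assumes kpos: "\<kappa> > 0" and u0pos: "u0 > 0" and kp: "kappa_profile \<kappa> u0 r u"
begin

lemma r0: "r 0 = 0" and u0: "u 0 = u0"
  using kp unfolding kappa_profile_def by auto

lemma dwithin:
  assumes "x \<in> {0..pi}"
  shows "(r has_real_derivative (cos x / (\<kappa> * u x))) (at x within {0..pi})"
    and "(u has_real_derivative (sin x / (\<kappa> * u x))) (at x within {0..pi})"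
  using kp assms unfolding kappa_profile_def by auto

lemma cont_r: "continuous_on {0..pi} r"
  by (rule DERIV_continuous_on[OF dwithin(1)])
lemma cont_u: "continuous_on {0..pi} u"
  by (rule DERIV_continuous_on[OF dwithin(2)])

lemma dat:
  assumes "0 < x" "x < pi"
  shows "(r has_real_derivative (cos x / (\<kappa> * u x))) (at x)"
    and "(u has_real_derivative (sin x / (\<kappa> * u x))) (at x)"
  using dwithin[of x] assms at_within_Icc_at[of 0 x pi] by auto

lemma cont_sub: "a \<ge> 0 \<Longrightarrow> b \<le> pi \<Longrightarrow> continuous_on {a..b} r"
   "a \<ge> 0 \<Longrightarrow> b \<le> pi \<Longrightarrow> continuous_on {a..b} u"
  using continuous_on_subset[OF cont_r] continuous_on_subset[OF cont_u] by auto

lemma u_ne0: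
  assumes "x \<in> {0..pi}" shows "u x \<noteq> 0"
proof -
  have "(u 0)^2 \<le> (u x)^2"
  proof (rule DERIV_nonneg_imp_increasing_open[of 0 x "\<lambda>t. (u t)^2"])
    show "0 \<le> x" using assms by auto
    show "continuous_on {0..x} (\<lambda>t. (u t)^2)"
      using cont_sub(2)[of 0 x] assms by (auto intro!: continuous_intros)
    fix t assume t: "0 < t" "t < x"
    have "((\<lambda>t. (u t)^2) has_real_derivative (2 * u t * (sin t / (\<kappa> * u t)))) (at t)"
      using dat(2)[of t] t assms by (auto intro!: derivative_eq_intros)
    moreover have "2 * u t * (sin t / (\<kappa> * u t)) \<ge> 0"
    proof (cases "u t = 0")
      case False
      then have "2 * u t * (sin t / (\<kappa> * u t)) = 2 * sin t / \<kappa>" by (simp add: field_simps)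
      moreover have "sin t \<ge> 0" using t assms by (auto intro!: sin_ge_zero)
      ultimately show ?thesis using kpos by simp
    qed simp
    ultimately show "\<exists>y. ((\<lambda>t. (u t)^2) has_real_derivative y) (at t) \<and> y \<ge> 0" by blast
  qed
  then show ?thesis using u0 u0pos by auto
qed

lemma u_pos:
  assumes "x \<in> {0..pi}" shows "u x > 0"
proof (rule ccontr)
  assume "\<not> u x > 0"
  then have "u x \<le> 0" by simp
  then obtain y where "0 \<le> y" "y \<le> x" "u y = 0"
    using IVT2'[of u x 0 0] cont_sub(2)[of 0 x] assms u0 u0pos by auto
  then show False using u_ne0[of y] assms by auto
qed

lemma u_mono:
  assumes "0 \<le> a" "a < b" "b \<le> pi" shows "u a < u b"
proof (rule DERIV_pos_imp_increasing_open[OF assms(2)])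
  show "continuous_on {a..b} u" using cont_sub assms by auto
  fix t assume t: "a < t" "t < b"
  then have "sin t > 0" "u t > 0" using assms u_pos[of t] by (auto intro!: sin_gt_zero)
  then show "\<exists>y. (u has_real_derivative y) (at t) \<and> y > 0"
    using dat(2)[of t] t assms kpos by (intro exI[of _ "sin t / (\<kappa> * u t)"]) auto
qed

lemma r_inc:
  assumes "0 \<le> a" "a < b" "b \<le> pi/2" shows "r a < r b"
proof (rule DERIV_pos_imp_increasing_open[OF assms(2)])
  show "continuous_on {a..b} r" using cont_sub assms by auto
  fix t assume t: "a < t" "t < b"
  then have "cos t > 0" "u t > 0" using assms u_pos[of t] by (auto intro!: cos_gt_zero)
  then show "\<exists>y. (r has_real_derivative y) (at t) \<and> y > 0"
    using dat(1)[of t] t assms kpos by (intro exI[of _ "cos t / (\<kappa> * u t)"]) auto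
qed

lemma r_dec:
  assumes "pi/2 \<le> a" "a < b" "b \<le> pi" shows "r a > r b"
proof (rule DERIV_neg_imp_decreasing_open[OF assms(2)])
  show "continuous_on {a..b} r" using cont_sub assms by auto
  fix t assume t: "a < t" "t < b"
  then have "cos t < 0" "u t > 0" using assms u_pos[of t] by (auto intro!: cos_neg)
  then show "\<exists>y. (r has_real_derivative y) (at t) \<and> y < 0"
    using dat(1)[of t] t assms kpos by (intro exI[of _ "cos t / (\<kappa> * u t)"]) (auto simp: divide_neg_pos)
qed

lemma r_gt:
  assumes "0 < t" "t \<le> pi/2" shows "r t > sin t / (\<kappa> * u t)"
proof -
  have "r 0 - sin 0 / (\<kappa> * u t) < r t - sin t / (\<kappa> * u t)"
  proof (rule DERIV_pos_imp_increasing_open[OF assms(1)])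
    show "continuous_on {0..t} (\<lambda>s. r s - sin s / (\<kappa> * u t))"
      using cont_sub(1)[of 0 t] assms kpos u_pos[of t] by (auto intro!: continuous_intros)
    fix s assume s: "0 < s" "s < t"
    have d: "((\<lambda>s. r s - sin s / (\<kappa> * u t)) has_real_derivative
          (cos s / (\<kappa> * u s) - cos s / (\<kappa> * u t))) (at s)"
      using dat(1)[of s] s assms kpos u_pos[of t] by (auto intro!: derivative_eq_intros)
    have "u s < u t" using u_mono[of s t] s assms by auto
    moreover have "u s > 0" using u_pos[of s] s assms by auto
    moreover have "cos s > 0" using s assms by (auto intro!: cos_gt_zero)
    ultimately have "cos s / (\<kappa> * u s) - cos s / (\<kappa> * u t) > 0"
      using kpos by (auto intro!: divide_strict_left_mono mult_strict_left_mono)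
    then show "\<exists>y. ((\<lambda>s. r s - sin s / (\<kappa> * u t)) has_real_derivative y) (at s) \<and> y > 0"
      using d by blast
  qed
  then show ?thesis using r0 by simp
qed

lemma ratio:
  assumes "0 < p" "p < g" "g \<le> pi/2" shows "r g * sin p < r p * sin g"
proof -
  have sp: "\<And>t. p \<le> t \<Longrightarrow> t \<le> g \<Longrightarrow> sin t > 0" using assms by (auto intro!: sin_gt_zero)
  have "r g / sin g < r p / sin p"
  proof (rule DERIV_neg_imp_decreasing_open[OF assms(2)])
    show "continuous_on {p..g} (\<lambda>t. r t / sin t)"
      using cont_sub(1)[of p g] assms sp by (auto intro!: continuous_intros simp: less_imp_neq[symmetric])
    fix t assume t: "p < t" "t < g"
    have st: "sin t > 0" using sp t by auto
    have d: "((\<lambda>t. r t / sin t) has_real_derivative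
          ((cos t / (\<kappa> * u t) * sin t - r t * cos t) / (sin t * sin t))) (at t)"
      using dat(1)[of t] t assms st by (auto intro!: derivative_eq_intros simp: power2_eq_square)
    have "r t > sin t / (\<kappa> * u t)" using r_gt[of t] t assms by auto
    moreover have "u t > 0" using u_pos[of t] t assms by auto
    moreover have "cos t > 0" using t assms by (auto intro!: cos_gt_zero)
    ultimately have "cos t / (\<kappa> * u t) * sin t - r t * cos t < 0"
      using kpos by (simp add: field_simps)
    then have "(cos t / (\<kappa> * u t) * sin t - r t * cos t) / (sin t * sin t) < 0"
      using st by (simp add: divide_neg_pos)
    then show "\<exists>y. ((\<lambda>t. r t / sin t) has_real_derivative y) (at t) \<and> y < 0" using d by blast
  qed
  then show ?thesis using sp[of p] sp[of g] assms by (simp add: field_simps)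
qed

definition V where "V t = 2 * (r t * u t - sin t / \<kappa>)"

lemma dV: assumes "0 < x" "x < pi"
  shows "(V has_real_derivative (2 * r x * sin x / (\<kappa> * u x))) (at x)"
proof -
  have "u x > 0" using u_pos[of x] assms by auto
  have "(V has_real_derivative
     2 * ((cos x / (\<kappa> * u x)) * u x + r x * (sin x / (\<kappa> * u x)) - cos x / \<kappa>)) (at x)"
    unfolding V_def[abs_def] using dat[of x] assms kpos \<open>u x > 0\<close> by (auto intro!: derivative_eq_intros)
  moreover have "2 * ((cos x / (\<kappa> * u x)) * u x + r x * (sin x / (\<kappa> * u x)) - cos x / \<kappa>)
     = 2 * r x * sin x / (\<kappa> * u x)" using \<open>u x > 0\<close> kpos by (simp add: field_simps)
  ultimately show ?thesis by simp
qed

lemma cont_V: "a \<ge> 0 \<Longrightarrow> b \<le> pi \<Longrightarrow> continuous_on {a..b} V"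
  unfolding V_def[abs_def] using cont_sub kpos by (auto intro!: continuous_intros)

lemma V0: "V 0 = 0" unfolding V_def using r0 by simp

end

definition AA :: "real \<Rightarrow> real" where "AA x = arcsin x - x * sqrt (1 - x^2)"

lemma dAA: assumes "-1 < x" "x < 1"
  shows "(AA has_real_derivative (2 * x^2 / sqrt (1 - x^2))) (at x)"
proof -
  have p: "1 - x^2 > 0" using assms by (simp add: abs_square_less_1)
  have "(AA has_real_derivative
      (inverse (sqrt (1 - x^2)) - (1 * sqrt (1 - x^2) + x * (inverse (sqrt (1 - x^2)) / 2 * (0 - 2 * x))))) (at x)"
    unfolding AA_def[abs_def] using assms p
    by (auto intro!: derivative_eq_intros DERIV_arcsin simp: power2_eq_square)
  moreover have "inverse (sqrt (1 - x^2)) - (1 * sqrt (1 - x^2) + x * (inverse (sqrt (1 - x^2)) / 2 * (0 - 2 * x)))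
     = 2 * x^2 / sqrt (1 - x^2)"
  proof -
    have s: "sqrt (1 - x^2) * sqrt (1 - x^2) = 1 - x^2" using p by simp
    show ?thesis using p s by (simp add: field_simps power2_eq_square)
  qed
  ultimately show ?thesis by simp
qed

lemma cont_AA: "continuous_on {-1..1} AA"
  unfolding AA_def[abs_def] by (auto intro!: continuous_intros)

lemma AA_mono: assumes "-1 \<le> a" "a \<le> b" "b \<le> 1" shows "AA a \<le> AA b"
proof (rule DERIV_nonneg_imp_increasing_open[OF assms(2)])
  show "continuous_on {a..b} AA" using continuous_on_subset[OF cont_AA] assms by auto
  fix t assume "a < t" "t < b"
  then show "\<exists>y. (AA has_real_derivative y) (at t) \<and> y \<ge> 0"
    using dAA[of t] assms by (intro exI[of _ "2 * t^2 / sqrt (1 - t^2)"]) (auto intro!: divide_nonneg_nonneg simp: abs_square_le_1)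
qed


context prof begin

lemma part1:
  assumes g: "0 < g" "g \<le> pi/2"
  shows "V g < (r g)^2 / (sin g)^2 * (g - sin g * cos g)"
proof -
  have sg: "sin g > 0" using g by (auto intro!: sin_gt_zero)
  have rg: "r g > 0" using r_inc[of 0 g] g r0 by auto
  define \<rho> where "\<rho> = r g / sin g"
  have rho: "\<rho> > 0" using sg rg unfolding \<rho>_def by simp
  have rhog: "r g = \<rho> * sin g" using sg unfolding \<rho>_def by simp
  have sg1: "sin g \<le> 1" by simp
  have rle: "0 \<le> r t \<and> r t \<le> \<rho>" if "0 \<le> t" "t \<le> g" for t
  proof -
    have "0 \<le> r t" using r_inc[of 0 t] that g r0 by (cases "t = 0") auto
    moreover have "r t \<le> r g" using r_inc[of t g] that g by (cases "t = g") auto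
    moreover have "r g \<le> \<rho>" using rhog rho sg1 by (simp add: mult_left_le)
    ultimately show ?thesis by simp
  qed
  define H where "H t = \<rho>^2 * AA (r t / \<rho>) - V t" for t
  have "H 0 < H g"
  proof (rule DERIV_pos_imp_increasing_open[OF g(1)])
    have c1: "continuous_on {0..g} (\<lambda>t. r t / \<rho>)"
      using cont_sub(1)[of 0 g] g rho by (auto intro!: continuous_intros)
    have xr: "r t / \<rho> \<in> {-1..1}" if "t \<in> {0..g}" for t
    proof -
      have "0 \<le> r t" "r t \<le> \<rho>" using rle[of t] that by auto
      then have "0 \<le> r t / \<rho>" "r t / \<rho> \<le> 1" using rho by auto
      then show ?thesis by simp
    qed
    have c2: "continuous_on {0..g} (\<lambda>t. AA (r t / \<rho>))"
      by (rule continuous_on_compose2[OF cont_AA c1]) (use xr in auto)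
    show "continuous_on {0..g} H" unfolding H_def
      using c2 cont_V[of 0 g] g by (auto intro!: continuous_intros)
    fix t assume t: "0 < t" "t < g"
    define x where "x = r t / \<rho>"
    define G where "G = 1 / (\<kappa> * u t)"
    have ut: "u t > 0" using u_pos[of t] t g by auto
    have Gp: "G > 0" unfolding G_def using ut kpos by simp
    have rt: "r t > 0" using r_inc[of 0 t] t g r0 by auto
    have xp: "x > 0" unfolding x_def using rt rho by simp
    have "r t < r g" using r_inc[of t g] t g by auto
    moreover have "r g \<le> \<rho>" using rle[of g] g by auto
    ultimately have x1: "x < 1" unfolding x_def using rho by simp
    have st: "sin t > 0" and ct: "cos t > 0" using t g by (auto intro!: sin_gt_zero cos_gt_zero)
    have "r g * sin t < r t * sin g" using ratio[of t g] t g by auto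
    then have xs: "x > sin t" unfolding x_def using rhog sg rho by (simp add: field_simps)
    define c where "c = sqrt (1 - x^2)"
    have cp: "c > 0" unfolding c_def using xp x1 by (simp add: power_less_one_iff abs_square_less_1)
    have "1 - x^2 < 1 - (sin t)^2" using xs st by (simp add: power_strict_mono)
    then have "c < sqrt ((cos t)^2)" unfolding c_def by (simp add: cos_squared_eq)
    then have cc: "c < cos t" using ct by simp
    have key: "x * cos t > sin t * c"
    proof -
      have "x * cos t > sin t * cos t" using xs ct by simp
      moreover have "sin t * cos t > sin t * c" using st cc by simp
      ultimately show ?thesis by linarith
    qed
    have dx: "((\<lambda>t. r t / \<rho>) has_real_derivative (cos t * G / \<rho>)) (at t)"
      using dat(1)[of t] t g rho unfolding G_def by (auto intro!: derivative_eq_intros)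
    have dA: "(AA has_real_derivative (2 * x^2 / c)) (at (r t / \<rho>))"
      using dAA[of x] xp x1 unfolding x_def c_def by auto
    have dH: "(H has_real_derivative (\<rho>^2 * ((2 * x^2 / c) * (cos t * G / \<rho>)) - 2 * r t * sin t * G)) (at t)"
      unfolding H_def[abs_def]
      using DERIV_chain2[OF dA dx] dV[of t] t g unfolding G_def
      by (auto intro!: derivative_eq_intros)
    have e: "\<rho>^2 * ((2 * x^2 / c) * (cos t * G / \<rho>)) - 2 * r t * sin t * G
        = 2 * r t * G * (x * cos t - sin t * c) / c"
      using cp rho unfolding x_def by (simp add: field_simps power2_eq_square)
    have "2 * r t * G * (x * cos t - sin t * c) / c > 0" using rt Gp key cp by simp
    then show "\<exists>y. (H has_real_derivative y) (at t) \<and> y > 0" using dH e by auto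
  qed
  moreover have "H 0 = 0" unfolding H_def using r0 V0 by (simp add: AA_def)
  moreover have "AA (sin g) = g - sin g * cos g"
  proof -
    have "cos g \<ge> 0" using g by (auto intro!: cos_ge_zero)
    then have "sqrt (1 - (sin g)^2) = cos g" by (simp add: cos_squared_eq[symmetric])
    moreover have "arcsin (sin g) = g" using g by (auto intro!: arcsin_sin)
    ultimately show ?thesis unfolding AA_def by simp
  qed
  moreover have "\<rho>^2 = (r g)^2 / (sin g)^2" unfolding \<rho>_def by (simp add: power_divide)
  moreover have "r g / \<rho> = sin g" using rhog rho by simp
  ultimately show ?thesis unfolding H_def by simp
qed


lemma r_ge:
  assumes "pi/2 \<le> p" "p \<le> pi" shows "r p \<ge> r (pi/2) * sin p"
proof (cases "p = pi/2")
  case True show ?thesis unfolding True by simp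
next
  case False
  then have p: "pi/2 < p" using assms by simp
  have RG: "r (pi/2) > 1 / (\<kappa> * u (pi/2))" using r_gt[of "pi/2"] by simp
  have "r (pi/2) - r (pi/2) * sin (pi/2) \<le> r p - r (pi/2) * sin p"
  proof (rule DERIV_nonneg_imp_increasing_open[of "pi/2" p "\<lambda>s. r s - r (pi/2) * sin s"])
    show "pi/2 \<le> p" using p by simp
    show "continuous_on {pi/2..p} (\<lambda>s. r s - r (pi/2) * sin s)"
      using cont_sub(1)[of "pi/2" p] assms by (auto intro!: continuous_intros)
    fix s assume s: "pi/2 < s" "s < p"
    have d: "((\<lambda>s. r s - r (pi/2) * sin s) has_real_derivative
          (cos s / (\<kappa> * u s) - r (pi/2) * cos s)) (at s)"
      using dat(1)[of s] s assms by (auto intro!: derivative_eq_intros)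
    have "u (pi/2) < u s" using u_mono[of "pi/2" s] s assms by auto
    moreover have "u (pi/2) > 0" using u_pos[of "pi/2"] by auto
    ultimately have "1 / (\<kappa> * u s) < 1 / (\<kappa> * u (pi/2))"
      using kpos by (intro divide_strict_left_mono mult_strict_left_mono) auto
    then have "1 / (\<kappa> * u s) - r (pi/2) < 0" using RG by simp
    moreover have "cos s < 0" using s assms by (auto intro!: cos_neg)
    ultimately have "cos s * (1 / (\<kappa> * u s) - r (pi/2)) \<ge> 0"
      by (simp add: mult_nonpos_nonpos)
    then have "cos s / (\<kappa> * u s) - r (pi/2) * cos s \<ge> 0" by (simp add: algebra_simps)
    then show "\<exists>y. ((\<lambda>s. r s - r (pi/2) * sin s) has_real_derivative y) (at s) \<and> y \<ge> 0"
      using d by blast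
  qed
  then show ?thesis by simp
qed

lemma part2:
  assumes g: "pi/2 \<le> g" "g \<le> pi"
  shows "V g < (r (pi/2))^2 * (g - sin g * cos g)"
proof -
  define R where "R = r (pi/2)"
  have P1: "V (pi/2) < R^2 * (pi/2)" using part1[of "pi/2"] unfolding R_def by simp
  show ?thesis
  proof (cases "g = pi/2")
    case True show ?thesis using P1 unfolding True R_def by simp
  next
    case False
    then have g1: "pi/2 < g" using g by simp
    have Rp: "R > 0" unfolding R_def using r_inc[of 0 "pi/2"] r0 by simp
    have rge: "r t \<ge> R * sin t" if "pi/2 \<le> t" "t \<le> pi" for t
      using r_ge[of t] that unfolding R_def by simp
    have rle: "r t \<le> R" if "pi/2 \<le> t" "t \<le> pi" for t
      using r_dec[of "pi/2" t] that unfolding R_def by (smt (verit))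
    have xr: "r t / R \<in> {-1..1}" if "t \<in> {pi/2..g}" for t
    proof -
      have "0 \<le> sin t" using that g by (auto intro!: sin_ge_zero)
      then have "0 \<le> R * sin t" using Rp by simp
      then have "0 \<le> r t" "r t \<le> R" using rge[of t] rle[of t] that g by auto
      then have "0 \<le> r t / R" "r t / R \<le> 1" using Rp by auto
      then show ?thesis by simp
    qed
    define H where "H t = R^2 * (pi - AA (r t / R)) - V t" for t
    have "H (pi/2) \<le> H g"
    proof (rule DERIV_nonneg_imp_increasing_open[of "pi/2" g H])
      show "pi/2 \<le> g" using g by simp
      have c1: "continuous_on {pi/2..g} (\<lambda>t. r t / R)"
        using cont_sub(1)[of "pi/2" g] g Rp by (auto intro!: continuous_intros)
      have c2: "continuous_on {pi/2..g} (\<lambda>t. AA (r t / R))"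
        by (rule continuous_on_compose2[OF cont_AA c1]) (use xr in auto)
      show "continuous_on {pi/2..g} H" unfolding H_def
        using c2 cont_V[of "pi/2" g] g by (auto intro!: continuous_intros)
      fix t assume t: "pi/2 < t" "t < g"
      define x where "x = r t / R"
      define G where "G = 1 / (\<kappa> * u t)"
      have ut: "u t > 0" using u_pos[of t] t g by auto
      have Gp: "G > 0" unfolding G_def using ut kpos by simp
      have st: "sin t > 0" and ct: "cos t < 0" using t g by (auto intro!: sin_gt_zero cos_neg)
      have rt: "r t \<ge> R * sin t" using rge[of t] t g by auto
      then have xs: "x \<ge> sin t" unfolding x_def using Rp by (simp add: field_simps)
      have xp: "x > 0" using xs st by simp
      have rt0: "r t > 0" using xp Rp unfolding x_def by (simp add: zero_less_divide_iff)
      have "r t < R" using r_dec[of "pi/2" t] t g unfolding R_def by auto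
      then have x1: "x < 1" unfolding x_def using Rp by simp
      define c where "c = sqrt (1 - x^2)"
      have cp: "c > 0" unfolding c_def using xp x1 by (simp add: power_less_one_iff abs_square_less_1)
      have "1 - x^2 \<le> 1 - (sin t)^2" using xs st by (simp add: power_mono)
      then have "c \<le> sqrt ((cos t)^2)" unfolding c_def by (simp add: cos_squared_eq)
      then have cc: "c \<le> - cos t" using ct by simp
      have key: "x * (- cos t) \<ge> sin t * c"
        using mult_mono[OF xs cc] st cp xp by (simp add: mult.commute)
      have dx: "((\<lambda>t. r t / R) has_real_derivative (cos t * G / R)) (at t)"
        using dat(1)[of t] t g Rp unfolding G_def by (auto intro!: derivative_eq_intros)
      have dA: "(AA has_real_derivative (2 * x^2 / c)) (at (r t / R))"
        using dAA[of x] xp x1 unfolding x_def c_def by auto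
      have dH: "(H has_real_derivative (R^2 * (0 - (2 * x^2 / c) * (cos t * G / R)) - 2 * r t * sin t * G)) (at t)"
        unfolding H_def[abs_def]
        using DERIV_chain2[OF dA dx] dV[of t] t g unfolding G_def
        by (auto intro!: derivative_eq_intros)
      have e: "R^2 * (0 - (2 * x^2 / c) * (cos t * G / R)) - 2 * r t * sin t * G
          = 2 * r t * G * (x * (- cos t) - sin t * c) / c"
        using cp Rp unfolding x_def by (simp add: field_simps power2_eq_square)
      have "2 * r t * G * (x * (- cos t) - sin t * c) / c \<ge> 0" using rt0 Gp key cp by simp
      then show "\<exists>y. (H has_real_derivative y) (at t) \<and> y \<ge> 0" using dH e by auto
    qed
    moreover have "H (pi/2) = R^2 * (pi/2) - V (pi/2)"
      unfolding H_def using Rp unfolding R_def by (simp add: AA_def)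
    moreover have "AA (sin g) \<le> AA (r g / R)"
    proof (rule AA_mono)
      show "-1 \<le> sin g" by simp
      show "sin g \<le> r g / R" using rge[of g] g Rp by (simp add: field_simps)
      show "r g / R \<le> 1" using xr[of g] g by auto
    qed
    moreover have "AA (sin g) = pi - g + sin g * cos g"
    proof -
      have "cos g \<le> 0" using g1 g cos_neg[of g] by (cases "g = pi") auto
      then have "sqrt (1 - (sin g)^2) = - cos g" by (simp add: cos_squared_eq[symmetric])
      moreover have "arcsin (sin g) = pi - g"
        using g arcsin_sin[of "pi - g"] by simp
      ultimately show ?thesis unfolding AA_def by simp
    qed
    ultimately have "V g \<le> R^2 * (g - sin g * cos g) - (R^2 * (pi/2) - V (pi/2))"
      unfolding H_def using Rp
      by (smt (verit) mult_left_mono zero_le_power2)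
    then show ?thesis using P1 unfolding R_def by simp
  qed
qed

end

theorem mainTheorem13:
  fixes \<kappa> u0 :: real and r u :: "real \<Rightarrow> real"
  assumes "\<kappa> > 0" and "u0 > 0"
    and "kappa_profile \<kappa> u0 r u"
  shows "(\<forall>\<gamma>. 0 < \<gamma> \<and> \<gamma> \<le> pi/2 \<longrightarrow>
           channel_volume \<kappa> r u \<gamma> < (r \<gamma>)\<^sup>2 / (sin \<gamma>)\<^sup>2 * (\<gamma> - sin \<gamma> * cos \<gamma>)) \<and>
         (\<forall>\<gamma>. pi/2 \<le> \<gamma> \<and> \<gamma> \<le> pi \<longrightarrow>
           channel_volume \<kappa> r u \<gamma> < (r (pi/2))\<^sup>2 * (\<gamma> - sin \<gamma> * cos \<gamma>))"
proof -
  interpret P: prof \<kappa> u0 r u using assms by unfold_locales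
  have e: "channel_volume \<kappa> r u t = P.V t" for t
    unfolding channel_volume_def P.V_def by simp
  show ?thesis unfolding e using P.part1 P.part2 by auto
qed

end
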